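(* Let $p\in(0,1/16)$, let $m,n$ be positive integers, and let $D_{mn}(p)=\{q\in(0,1/16):\ \tfrac{15}{16}\le\tfrac{q^n}{p^m}\le\tfrac{16}{15}\}$. Fix $i,j\in\{3,4\}$ and for $q\in(0,1/16)$ and $\sigma,\tau\in I^\infty$ put $\varphi_1(q,\sigma)=S_1^mS_i\pi_{pq}(\sigma)$ and $\varphi_2(q,\tau)=S_2^nS_j\pi_{pq}(\tau)$, where the maps $S_2,S_4$ are those with parameter $q$. Then for all $\sigma,\tau\in I^\infty$ and all $q,q'\in D_{mn}(p)$ with $q\neq q'$, $$|\varphi_1(q,\sigma)-\varphi_2(q,\tau)-\varphi_1(q',\sigma)+\varphi_2(q',\tau)|>11\,p^m|q'-q|.$$
   Context: For $p,q\in(0,1/2)$ let $S_1(x)=px$, $S_2(x)=qx$, $S_3(x)=px+1-p$, $S_4(x)=qx+1-q$, and let $K_{pq}$ be the attractor of $\{S_1,S_2,S_3,S_4\}$ (the unique nonempty compact $K\subset\mathbb R$ with $K=\bigcup_{i=1}^4S_i(K)$). $I=\{1,2,3,4\}$, $I^\infty$ is the set of infinite sequences over $I$, and $\pi_{pq}:I^\infty\to K_{pq}$ sends $\sigma=\sigma_1\sigma_2\dots$ to the unique point of $\bigcap_{k\ge1}S_{\sigma_1}\circ\cdots\circ S_{\sigma_k}(K_{pq})$. *)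

theory Defs
  imports "HOL-Analysis.Analysis"
begin

definition S :: "real \<Rightarrow> real \<Rightarrow> nat \<Rightarrow> real \<Rightarrow> real" where
  "S p q k x = (if k = 1 then p * x
                else if k = 2 then q * x
                else if k = 3 then p * x + 1 - p
                else q * x + 1 - q)"

definition attractor :: "real \<Rightarrow> real \<Rightarrow> real set" where
  "attractor p q = (THE K. compact K \<and> K \<noteq> {} \<and> K = (\<Union>k\<in>{1,2,3,4}. S p q k ` K))"

text \<open>Infinite words over I = {1,2,3,4}: functions nat => nat with values in {1..4}.
  wcomp p q \<sigma> k = S_{\<sigma>_1} o ... o S_{\<sigma>_k} (with \<sigma>_1 = \<sigma> 0).\<close>
primrec wcomp :: "real \<Rightarrow> real \<Rightarrow> (nat \<Rightarrow> nat) \<Rightarrow> nat \<Rightarrow> real \<Rightarrow> real" where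
  "wcomp p q \<sigma> 0 = id"
| "wcomp p q \<sigma> (Suc k) = wcomp p q \<sigma> k \<circ> S p q (\<sigma> k)"

definition words :: "(nat \<Rightarrow> nat) set" where
  "words = {\<sigma>. \<forall>k. \<sigma> k \<in> {1,2,3,4}}"

definition piK :: "real \<Rightarrow> real \<Rightarrow> (nat \<Rightarrow> nat) \<Rightarrow> real" where
  "piK p q \<sigma> = (THE x. x \<in> (\<Inter>k\<in>{1..}. wcomp p q \<sigma> k ` attractor p q))"

definition Dmn :: "nat \<Rightarrow> nat \<Rightarrow> real \<Rightarrow> real set" where
  "Dmn m n p = {q. 0 < q \<and> q < 1/16 \<and> 15/16 \<le> q ^ n / p ^ m \<and> q ^ n / p ^ m \<le> 16/15}"

definition phi1 :: "real \<Rightarrow> nat \<Rightarrow> nat \<Rightarrow> real \<Rightarrow> (nat \<Rightarrow> nat) \<Rightarrow> real" where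
  "phi1 p m i q \<sigma> = (S p q 1 ^^ m) (S p q i (piK p q \<sigma>))"

definition phi2 :: "real \<Rightarrow> nat \<Rightarrow> nat \<Rightarrow> real \<Rightarrow> (nat \<Rightarrow> nat) \<Rightarrow> real" where
  "phi2 p n j q \<tau> = (S p q 2 ^^ n) (S p q j (piK p q \<tau>))"

end

theory Submission imports Defs begin

definition rr :: "real \<Rightarrow> real \<Rightarrow> nat \<Rightarrow> real" where
  "rr p q k = (if k = 1 \<or> k = 3 then p else q)"
definition bb :: "real \<Rightarrow> real \<Rightarrow> nat \<Rightarrow> real" where
  "bb p q k = (if k = 1 \<or> k = 2 then 0 else 1 - rr p q k)"
definition PP :: "real \<Rightarrow> real \<Rightarrow> (nat \<Rightarrow> nat) \<Rightarrow> nat \<Rightarrow> real" where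
  "PP p q \<sigma> k = (\<Prod>l<k. rr p q (\<sigma> l))"
definition tm :: "real \<Rightarrow> real \<Rightarrow> (nat \<Rightarrow> nat) \<Rightarrow> nat \<Rightarrow> real" where
  "tm p q \<sigma> l = bb p q (\<sigma> l) * PP p q \<sigma> l"
definition pis :: "real \<Rightarrow> real \<Rightarrow> (nat \<Rightarrow> nat) \<Rightarrow> real" where
  "pis p q \<sigma> = suminf (tm p q \<sigma>)"

lemma S_eq: "S p q k x = rr p q k * x + bb p q k"
  by (simp add: S_def rr_def bb_def)

lemma wcomp_form: "wcomp p q \<sigma> k x = (\<Sum>l<k. tm p q \<sigma> l) + PP p q \<sigma> k * x"
  by (induction k arbitrary: x) (simp_all add: S_eq PP_def tm_def algebra_simps)

lemma wcomp_diff: "wcomp p q \<sigma> k x - wcomp p q \<sigma> k y = PP p q \<sigma> k * (x - y)"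
  by (simp add: wcomp_form algebra_simps)

lemma lim_by_geom:
  fixes c C L :: real
  assumes "0 \<le> c" "c < 1" "\<And>n. \<bar>f n - L\<bar> \<le> C * c ^ n"
  shows "f \<longlonglongrightarrow> L"
proof -
  have "(\<lambda>n. C * c ^ n) \<longlonglongrightarrow> 0"
    using LIMSEQ_power_zero[of c] assms(1,2) tendsto_mult_right_zero by auto
  then have "(\<lambda>n. f n - L) \<longlonglongrightarrow> 0"
    by (rule Lim_null_comparison[rotated]) (use assms(3) in auto)
  then show ?thesis using Lim_null by blast
qed

lemma eq_by_geom:
  fixes c C x y :: real
  assumes "0 \<le> c" "c < 1" "\<And>n. \<bar>x - y\<bar> \<le> C * c ^ n"
  shows "x = y"
proof -
  have "(\<lambda>n. x) \<longlonglongrightarrow> y" using lim_by_geom[OF assms] .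
  then show ?thesis using LIMSEQ_const_iff by blast
qed

context
  fixes p q :: real
  assumes p0: "0 < p" and p1: "p < 1" and q0: "0 < q" and q1: "q < 1"
begin

lemma rr_pos: "0 < rr p q k" using p0 q0 by (simp add: rr_def)
lemma rr_le: "rr p q k \<le> max p q" by (simp add: rr_def)
lemma c_lt: "max p q < 1" using p1 q1 by simp
lemma c_ge: "0 \<le> max p q" using p0 by simp
lemma bb_nonneg: "0 \<le> bb p q k" using p1 q1 by (simp add: bb_def rr_def)
lemma bb_le: "bb p q k \<le> 1 - rr p q k" using p1 q1 by (simp add: bb_def rr_def)
lemma bb_le1: "bb p q k \<le> 1" using bb_le[of k] rr_pos[of k] by linarith

lemma PP_nonneg: "0 \<le> PP p q \<sigma> k"
  unfolding PP_def by (rule prod_nonneg) (use rr_pos less_imp_le in blast)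

lemma PP_le: "PP p q \<sigma> k \<le> max p q ^ k"
proof (induction k)
  case 0 then show ?case by (simp add: PP_def)
next
  case (Suc k)
  have "PP p q \<sigma> (Suc k) = PP p q \<sigma> k * rr p q (\<sigma> k)" by (simp add: PP_def)
  also have "\<dots> \<le> max p q ^ k * max p q"
    by (rule mult_mono) (use Suc rr_le PP_nonneg c_ge less_imp_le[OF rr_pos] in auto)
  finally show ?case by (simp add: mult.commute)
qed

lemma tm_nonneg: "0 \<le> tm p q \<sigma> l"
  unfolding tm_def using bb_nonneg PP_nonneg by simp

lemma tm_le: "tm p q \<sigma> l \<le> max p q ^ l"
proof -
  have "tm p q \<sigma> l \<le> 1 * max p q ^ l"
    unfolding tm_def
    by (rule mult_mono) (use bb_le1 PP_le PP_nonneg c_ge in auto)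
  then show ?thesis by simp
qed

lemma tm_summable: "summable (tm p q \<sigma>)"
  by (rule summable_comparison_test'[where g = "\<lambda>n. max p q ^ n" and N = 0])
     (use summable_geometric c_lt c_ge tm_nonneg tm_le in auto)

lemma partial_le: "(\<Sum>l<N. tm p q \<sigma> l) \<le> 1 - PP p q \<sigma> N"
proof (induction N)
  case 0 then show ?case by (simp add: PP_def)
next
  case (Suc N)
  have "(\<Sum>l<Suc N. tm p q \<sigma> l) = (\<Sum>l<N. tm p q \<sigma> l) + bb p q (\<sigma> N) * PP p q \<sigma> N"
    by (simp add: tm_def)
  also have "\<dots> \<le> 1 - PP p q \<sigma> N + (1 - rr p q (\<sigma> N)) * PP p q \<sigma> N"
    using Suc mult_right_mono[OF bb_le[of "\<sigma> N"] PP_nonneg[of \<sigma> N]] by linarith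
  also have "\<dots> = 1 - PP p q \<sigma> (Suc N)" by (simp add: PP_def algebra_simps)
  finally show ?case .
qed

lemma pis_nonneg: "0 \<le> pis p q \<sigma>"
  unfolding pis_def by (rule suminf_nonneg) (use tm_summable tm_nonneg in auto)

lemma pis_le1: "pis p q \<sigma> \<le> 1"
  unfolding pis_def
proof (rule suminf_le_const[OF tm_summable])
  fix n show "sum (tm p q \<sigma>) {..<n} \<le> 1" using partial_le[of \<sigma> n] PP_nonneg[of \<sigma> n] by linarith
qed

lemma pis_shift: "pis p q \<sigma> = S p q (\<sigma> 0) (pis p q (\<lambda>l. \<sigma> (Suc l)))"
proof -
  have t: "tm p q \<sigma> (Suc l) = rr p q (\<sigma> 0) * tm p q (\<lambda>l. \<sigma> (Suc l)) l" for l
    unfolding tm_def PP_def by (simp only: prod.lessThan_Suc_shift) simp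
  have "(\<Sum>n. tm p q \<sigma> (Suc n)) = suminf (tm p q \<sigma>) - tm p q \<sigma> 0"
    using suminf_split_head[OF tm_summable] .
  moreover have "(\<Sum>n. tm p q \<sigma> (Suc n)) = rr p q (\<sigma> 0) * pis p q (\<lambda>l. \<sigma> (Suc l))"
    unfolding t pis_def by (rule suminf_mult[OF tm_summable])
  moreover have "tm p q \<sigma> 0 = bb p q (\<sigma> 0)" by (simp add: tm_def PP_def)
  ultimately show ?thesis by (simp add: S_eq pis_def)
qed

lemma pis_kshift: "pis p q \<sigma> = wcomp p q \<sigma> k (pis p q (\<lambda>l. \<sigma> (l + k)))"
proof (induction k)
  case 0 then show ?case by simp
next
  case (Suc k)
  have "pis p q (\<lambda>l. \<sigma> (l + k)) = S p q (\<sigma> k) (pis p q (\<lambda>l. \<sigma> (l + Suc k)))"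
    using pis_shift[of "\<lambda>l. \<sigma> (l + k)"] by simp
  then show ?case using Suc by simp
qed


definition Pset :: "real set" where "Pset = pis p q ` words"

lemma shift_words: "\<sigma> \<in> words \<Longrightarrow> (\<lambda>l. \<sigma> (l + k)) \<in> words"
  by (simp add: words_def)

lemma wcomp_close:
  assumes "\<And>n. \<bar>f n\<bar> \<le> B" 
  shows "\<bar>wcomp p q \<sigma> n (f n) - pis p q \<sigma>\<bar> \<le> (B + 1) * max p q ^ n"
proof -
  have "\<bar>wcomp p q \<sigma> n (f n) - pis p q \<sigma>\<bar>
      = \<bar>wcomp p q \<sigma> n (f n) - wcomp p q \<sigma> n (pis p q (\<lambda>l. \<sigma> (l + n)))\<bar>"
    using pis_kshift[of \<sigma> n] by simp
  also have "\<dots> = PP p q \<sigma> n * \<bar>f n - pis p q (\<lambda>l. \<sigma> (l + n))\<bar>"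
    unfolding wcomp_diff using PP_nonneg by (simp add: abs_mult)
  also have "\<dots> \<le> max p q ^ n * (B + 1)"
  proof (rule mult_mono)
    show "\<bar>f n - pis p q (\<lambda>l. \<sigma> (l + n))\<bar> \<le> B + 1"
      using assms[of n] pis_nonneg[of "\<lambda>l. \<sigma> (l + n)"] pis_le1[of "\<lambda>l. \<sigma> (l + n)"] by linarith
  qed (use PP_le c_ge in auto)
  finally show ?thesis by (simp add: mult.commute)
qed

lemma char:
  assumes K: "compact K" "K \<noteq> {}" "K = (\<Union>k\<in>{1,2,3,4}. S p q k ` K)"
  shows "K = Pset"
proof
  obtain B where B: "\<And>x. x \<in> K \<Longrightarrow> \<bar>x\<bar> \<le> B"
    using compact_imp_bounded[OF K(1)] unfolding bounded_iff by auto
  show "K \<subseteq> Pset"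
  proof
    fix x assume x: "x \<in> K"
    have ex: "\<forall>y\<in>K. \<exists>z. fst z \<in> {1,2,3,4} \<and> snd z \<in> K \<and> y = S p q (fst z) (snd z)"
    proof
      fix y assume "y \<in> K"
      then have "y \<in> (\<Union>k\<in>{1,2,3,4}. S p q k ` K)" using K(3) by blast
      then obtain k z where "k \<in> {1,2,3,4}" "z \<in> K" "y = S p q k z" by blast
      then show "\<exists>z. fst z \<in> {1,2,3,4} \<and> snd z \<in> K \<and> y = S p q (fst z) (snd z)"
        by (intro exI[of _ "(k,z)"]) auto
    qed
    obtain g where g: "\<And>y. y \<in> K \<Longrightarrow> fst (g y) \<in> {1,2,3,4} \<and> snd (g y) \<in> K \<and> y = S p q (fst (g y)) (snd (g y))"
      using bchoice[OF ex] by blast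
    define xs where "xs n = ((snd \<circ> g) ^^ n) x" for n
    define \<sigma> where "\<sigma> n = fst (g (xs n))" for n
    have xsK: "xs n \<in> K" for n
      by (induction n) (use x g in \<open>auto simp: xs_def\<close>)
    have xsS: "xs (Suc n) = snd (g (xs n))" for n by (simp add: xs_def)
    have sw: "\<sigma> \<in> words" unfolding words_def \<sigma>_def using g xsK by simp
    have wx: "wcomp p q \<sigma> n (xs n) = x" for n
    proof (induction n)
      case 0 then show ?case by (simp add: xs_def)
    next
      case (Suc n)
      have "S p q (\<sigma> n) (xs (Suc n)) = xs n"
        unfolding xsS \<sigma>_def using g[OF xsK[of n]] by simp
      then show ?case using Suc by simp
    qed
    have "x = pis p q \<sigma>"
    proof (rule eq_by_geom[OF c_ge c_lt])
      fix n
      show "\<bar>x - pis p q \<sigma>\<bar> \<le> (B + 1) * max p q ^ n"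
      proof -
        have "\<bar>wcomp p q \<sigma> n (xs n) - pis p q \<sigma>\<bar> \<le> (B + 1) * max p q ^ n"
          by (rule wcomp_close) (use B xsK in blast)
        then show ?thesis using wx[of n] by simp
      qed
    qed
    then show "x \<in> Pset" unfolding Pset_def using sw by blast
  qed
  show "Pset \<subseteq> K"
  proof
    fix x assume "x \<in> Pset"
    then obtain \<sigma> where s: "\<sigma> \<in> words" "x = pis p q \<sigma>" unfolding Pset_def by blast
    obtain y0 where y0: "y0 \<in> K" using K(2) by blast
    have inK: "\<forall>y\<in>K. wcomp p q \<sigma> n y \<in> K" for n
    proof (induction n)
      case 0 then show ?case by simp
    next
      case (Suc n)
      show ?case
      proof
        fix y assume "y \<in> K"
        then have "S p q (\<sigma> n) y \<in> K" using s(1) K(3) unfolding words_def by blast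
        then show "wcomp p q \<sigma> (Suc n) y \<in> K" using Suc by simp
      qed
    qed
    have lim: "(\<lambda>n. wcomp p q \<sigma> n y0) \<longlonglongrightarrow> pis p q \<sigma>"
      by (rule lim_by_geom[OF c_ge c_lt]) (rule wcomp_close[of "\<lambda>n. y0" "\<bar>y0\<bar>"], simp)
    have mem: "\<And>n. wcomp p q \<sigma> n y0 \<in> K" using inK y0 by blast
    have "pis p q \<sigma> \<in> K" by (rule closed_sequentially[OF compact_imp_closed[OF K(1)] mem lim])
    then show "x \<in> K" using s(2) by simp
  qed
qed

lemma Pset_inv: "(\<Union>k\<in>{1,2,3,4}. S p q k ` Pset) = Pset"
proof
  have H: "S p q k (pis p q \<sigma>) \<in> Pset" if k: "k \<in> {1,2,3,4}" and s: "\<sigma> \<in> words" for k \<sigma>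
  proof -
    define \<tau> where "\<tau> l = (if l = 0 then k else \<sigma> (l - 1))" for l
    have "\<tau> \<in> words" using k s unfolding words_def \<tau>_def by auto
    moreover have "pis p q \<tau> = S p q k (pis p q \<sigma>)"
      using pis_shift[of \<tau>] by (simp add: \<tau>_def)
    ultimately show "S p q k (pis p q \<sigma>) \<in> Pset" unfolding Pset_def by (metis image_eqI)
  qed
  show "(\<Union>k\<in>{1,2,3,4}. S p q k ` Pset) \<subseteq> Pset"
    using H unfolding Pset_def by blast
  show "Pset \<subseteq> (\<Union>k\<in>{1,2,3,4}. S p q k ` Pset)"
  proof
    fix x assume "x \<in> Pset"
    then obtain \<sigma> where s: "\<sigma> \<in> words" "x = pis p q \<sigma>" unfolding Pset_def by blast
    have "(\<lambda>l. \<sigma> (Suc l)) \<in> words" using s(1) by (simp add: words_def)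
    then have "x \<in> S p q (\<sigma> 0) ` Pset" using pis_shift[of \<sigma>] s(2) unfolding Pset_def by blast
    moreover have "\<sigma> 0 \<in> {1,2,3,4}" using s(1) by (simp add: words_def)
    ultimately show "x \<in> (\<Union>k\<in>{1,2,3,4}. S p q k ` Pset)" by blast
  qed
qed

lemma Pset_bounded: "bounded Pset"
  unfolding bounded_iff Pset_def using pis_nonneg pis_le1 by (intro exI[of _ 1]) auto

lemma image_closure_eq:
  fixes f :: "real \<Rightarrow> real"
  assumes "continuous_on UNIV f" "bounded A"
  shows "f ` closure A = closure (f ` A)"
proof
  show "f ` closure A \<subseteq> closure (f ` A)"
    by (rule image_closure_subset[OF continuous_on_subset[OF assms(1)] closed_closure closure_subset]) simp
  have c1: "compact (f ` closure A)"
    using assms compact_closure compact_continuous_image continuous_on_subset by blast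
  have c2: "f ` A \<subseteq> f ` closure A" using closure_subset by blast
  show "closure (f ` A) \<subseteq> f ` closure A"
    by (rule closure_minimal[OF c2 compact_imp_closed[OF c1]])
qed

lemma S_cont: "continuous_on UNIV (S p q k)"
  unfolding S_eq[abs_def] by (intro continuous_intros)

lemma attractor_eq: "attractor p q = Pset"
proof -
  let ?P = "\<lambda>K. compact K \<and> K \<noteq> {} \<and> K = (\<Union>k\<in>{1,2,3,4}. S p q k ` K)"
  have ne: "Pset \<noteq> {}" unfolding Pset_def words_def by (auto intro!: exI[of _ "\<lambda>_. 1"])
  have h: "?P (closure Pset)"
  proof (intro conjI)
    show "compact (closure Pset)" using Pset_bounded compact_closure by blast
    show "closure Pset \<noteq> {}" using ne by simp
    have "(\<Union>k\<in>{1,2,3,4}. S p q k ` closure Pset) = (\<Union>k\<in>{1,2,3,4}. closure (S p q k ` Pset))"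
      using image_closure_eq[OF S_cont Pset_bounded] by simp
    also have "\<dots> = closure (\<Union>k\<in>{1,2,3,4}. S p q k ` Pset)"
      by (simp add: closure_Un)
    also have "\<dots> = closure Pset" using Pset_inv by simp
    finally show "closure Pset = (\<Union>k\<in>{1,2,3,4}. S p q k ` closure Pset)" by simp
  qed
  have cP: "closure Pset = Pset"
    by (rule char[OF conjunct1[OF h] conjunct1[OF conjunct2[OF h]] conjunct2[OF conjunct2[OF h]]])
  have "?P Pset" using h unfolding cP .
  then show ?thesis unfolding attractor_def
  proof (rule the_equality)
    fix K assume h2: "?P K"
    show "K = Pset"
      by (rule char[OF conjunct1[OF h2] conjunct1[OF conjunct2[OF h2]] conjunct2[OF conjunct2[OF h2]]])
  qed
qed

lemma piK_eq:
  assumes s: "\<sigma> \<in> words"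
  shows "piK p q \<sigma> = pis p q \<sigma>"
  unfolding piK_def attractor_eq
proof (rule the_equality)
  show "pis p q \<sigma> \<in> (\<Inter>k\<in>{1..}. wcomp p q \<sigma> k ` Pset)"
  proof (rule INT_I)
    fix k :: nat
    have "pis p q (\<lambda>l. \<sigma> (l + k)) \<in> Pset" unfolding Pset_def using shift_words[OF s] by (rule imageI)
    then show "pis p q \<sigma> \<in> wcomp p q \<sigma> k ` Pset" by (subst pis_kshift[of \<sigma> k]) (rule imageI)
  qed
next
  fix x assume x: "x \<in> (\<Inter>k\<in>{1..}. wcomp p q \<sigma> k ` Pset)"
  show "x = pis p q \<sigma>"
  proof (rule eq_by_geom[OF c_ge c_lt])
    fix n
    have "Suc n \<in> {1..}" by simp
    then have "x \<in> wcomp p q \<sigma> (Suc n) ` Pset" using x by blast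
    then obtain \<tau> where t: "x = wcomp p q \<sigma> (Suc n) (pis p q \<tau>)" unfolding Pset_def by blast
    have "\<bar>x - pis p q \<sigma>\<bar> \<le> (1 + 1) * max p q ^ Suc n"
      using wcomp_close[of "\<lambda>_. pis p q \<tau>" 1 \<sigma> "Suc n"] t pis_nonneg pis_le1 by auto
    also have "\<dots> \<le> 2 * max p q ^ n"
      using c_ge c_lt by (simp add: mult_left_le_one_le)
    finally show "\<bar>x - pis p q \<sigma>\<bar> \<le> 2 * max p q ^ n" .
  qed
qed

end

lemma aux_lin:
  fixes q q' t d :: real
  assumes "\<bar>t\<bar> \<le> 1" "0 < q'" "q' < 1/16"
  shows "\<bar>(q - q') * t + q' * d\<bar> \<le> \<bar>q - q'\<bar> + 1/16 * \<bar>d\<bar>"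
proof -
  have "\<bar>(q - q') * t + q' * d\<bar> \<le> \<bar>q - q'\<bar> * \<bar>t\<bar> + q' * \<bar>d\<bar>"
    using abs_triangle_ineq[of "(q - q') * t" "q' * d"] assms(2) by (simp add: abs_mult)
  also have "\<dots> \<le> \<bar>q - q'\<bar> * 1 + 1/16 * \<bar>d\<bar>"
    by (intro add_mono mult_left_mono mult_right_mono) (use assms in auto)
  finally show ?thesis by simp
qed

lemma S_lip:
  fixes p q q' A A' :: real
  assumes "0 < p" "p < 1/16" "0 < q'" "q' < 1/16" "0 \<le> A" "A \<le> 1"
  shows "\<bar>S p q k A - S p q' k A'\<bar> \<le> \<bar>q - q'\<bar> + 1/16 * \<bar>A - A'\<bar>"
proof (cases "k = 1 \<or> k = 3")
  case True
  then have "S p q k A - S p q' k A' = p * (A - A')" by (auto simp: S_def algebra_simps)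
  then have "\<bar>S p q k A - S p q' k A'\<bar> = p * \<bar>A - A'\<bar>" using assms(1) by (simp add: abs_mult)
  also have "\<dots> \<le> 1/16 * \<bar>A - A'\<bar>" using assms(2) by (intro mult_right_mono) auto
  finally have "\<bar>S p q k A - S p q' k A'\<bar> \<le> 1/16 * \<bar>A - A'\<bar>" .
  then show ?thesis by (smt (verit) abs_ge_zero)
next
  case False
  show ?thesis
  proof (cases "k = 2")
    case True
    then have "S p q k A - S p q' k A' = (q - q') * A + q' * (A - A')" by (simp add: S_def algebra_simps)
    then show ?thesis using aux_lin[of A q' q "A - A'"] assms by simp
  next
    case F2: False
    then have "S p q k A - S p q' k A' = (q - q') * (A - 1) + q' * (A - A')"
      using False by (simp add: S_def algebra_simps)
    then show ?thesis using aux_lin[of "A - 1" q' q "A - A'"] assms by simp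
  qed
qed

lemma lip_N:
  fixes p q q' :: real
  assumes p: "0 < p" "p < 1/16" and q: "0 < q" "q < 1/16" and q': "0 < q'" "q' < 1/16"
  shows "\<forall>\<sigma>. \<bar>pis p q \<sigma> - pis p q' \<sigma>\<bar> \<le> 16/15 * \<bar>q - q'\<bar> + (1/16) ^ N"
proof (induction N)
  case 0
  have "\<bar>pis p q \<sigma> - pis p q' \<sigma>\<bar> \<le> 1" for \<sigma>
    using pis_nonneg[of p q \<sigma>] pis_le1[of p q \<sigma>] pis_nonneg[of p q' \<sigma>] pis_le1[of p q' \<sigma>] p q q'
    by (simp add: abs_le_iff)
  then show ?case by (simp add: add_increasing)
next
  case (Suc N)
  show ?case
  proof
    fix \<sigma> :: "nat \<Rightarrow> nat"
    define A where "A = pis p q (\<lambda>l. \<sigma> (Suc l))"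
    define A' where "A' = pis p q' (\<lambda>l. \<sigma> (Suc l))"
    have e1: "pis p q \<sigma> = S p q (\<sigma> 0) A" unfolding A_def by (rule pis_shift) (use p q in auto)
    have e2: "pis p q' \<sigma> = S p q' (\<sigma> 0) A'" unfolding A'_def by (rule pis_shift) (use p q' in auto)
    have A01: "0 \<le> A" "A \<le> 1" unfolding A_def using pis_nonneg pis_le1 p q by auto
    have IH: "\<bar>A - A'\<bar> \<le> 16/15 * \<bar>q - q'\<bar> + (1/16) ^ N" unfolding A_def A'_def using Suc by blast
    have "\<bar>pis p q \<sigma> - pis p q' \<sigma>\<bar> \<le> \<bar>q - q'\<bar> + 1/16 * \<bar>A - A'\<bar>"
      unfolding e1 e2 by (rule S_lip) (use p q' A01 in auto)
    also have "\<dots> \<le> \<bar>q - q'\<bar> + 1/16 * (16/15 * \<bar>q - q'\<bar> + (1/16) ^ N)"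
      using IH by simp
    also have "\<dots> = 16/15 * \<bar>q - q'\<bar> + (1/16) ^ Suc N" by (simp add: algebra_simps)
    finally show "\<bar>pis p q \<sigma> - pis p q' \<sigma>\<bar> \<le> 16/15 * \<bar>q - q'\<bar> + (1/16) ^ Suc N" .
  qed
qed

lemma lip:
  fixes p q q' :: real
  assumes p: "0 < p" "p < 1/16" and q: "0 < q" "q < 1/16" and q': "0 < q'" "q' < 1/16"
  shows "\<bar>pis p q \<sigma> - pis p q' \<sigma>\<bar> \<le> 16/15 * \<bar>q - q'\<bar>"
proof (rule ccontr)
  assume "\<not> ?thesis"
  then have "0 < \<bar>pis p q \<sigma> - pis p q' \<sigma>\<bar> - 16/15 * \<bar>q - q'\<bar>" by simp
  then obtain N where N: "(1/16::real) ^ N < \<bar>pis p q \<sigma> - pis p q' \<sigma>\<bar> - 16/15 * \<bar>q - q'\<bar>"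
    using real_arch_pow_inv[of "\<bar>pis p q \<sigma> - pis p q' \<sigma>\<bar> - 16/15 * \<bar>q - q'\<bar>" "1/16::real"] by auto
  moreover have "\<bar>pis p q \<sigma> - pis p q' \<sigma>\<bar> \<le> 16/15 * \<bar>q - q'\<bar> + (1/16) ^ N"
    using lip_N[OF p q q', of N] by blast
  ultimately show False by linarith
qed

lemma S1_pow: "(S p q 1 ^^ m) x = p ^ m * x"
  by (induction m) (simp_all add: S_def)

lemma S2_pow: "(S p q 2 ^^ n) x = q ^ n * x"
  by (induction n) (simp_all add: S_def)


lemma powdiff:
  fixes a b :: real
  assumes "0 < b" "b < a" "b < 1/16" "0 < n"
  shows "(a - b) * (16 * b ^ n) \<le> a ^ n - b ^ n"
proof -
  obtain k where n: "n = Suc k" using assms(4) by (cases n) auto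
  have "b ^ k \<le> a ^ k" using assms by (intro power_mono) auto
  then have "a * b ^ k \<le> a * a ^ k" using assms by (intro mult_left_mono) auto
  then have h1: "(a - b) * b ^ k \<le> a ^ n - b ^ n" using n by (simp add: algebra_simps)
  have "b * b ^ k \<le> 1/16 * b ^ k" using assms by (intro mult_right_mono) auto
  then have "16 * b ^ n \<le> b ^ k" using n by simp
  then have "(a - b) * (16 * b ^ n) \<le> (a - b) * b ^ k" using assms by (intro mult_left_mono) auto
  with h1 show ?thesis by linarith
qed

lemma powdiff_abs:
  fixes p q q' :: real
  assumes "q \<in> Dmn m n p" "q' \<in> Dmn m n p" "0 < n" "0 < p"
  shows "15 * (p ^ m * \<bar>q - q'\<bar>) \<le> \<bar>q ^ n - q' ^ n\<bar>"
proof -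
  have pm: "0 < p ^ m" using assms by simp
  have l: "15/16 * p ^ m \<le> x ^ n" if "x \<in> Dmn m n p" for x
    using that pm by (simp add: Dmn_def pos_le_divide_eq mult.commute)
  have g: "15 * (p ^ m * (a - b)) \<le> a ^ n - b ^ n"
    if "a \<in> Dmn m n p" "b \<in> Dmn m n p" "b < a" for a b
  proof -
    have "0 < b" "b < 1/16" using that by (auto simp: Dmn_def)
    then have "(a - b) * (16 * b ^ n) \<le> a ^ n - b ^ n" using powdiff that assms(3) by blast
    moreover have "(15 * p ^ m) * (a - b) \<le> (16 * b ^ n) * (a - b)"
      using l[OF that(2)] that(3) by (intro mult_right_mono) auto
    moreover have "15 * (p ^ m * (a - b)) = (15 * p ^ m) * (a - b)" by simp
    moreover have "(a - b) * (16 * b ^ n) = (16 * b ^ n) * (a - b)" by simp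
    ultimately show ?thesis by linarith
  qed
  consider "q' < q" | "q < q'" | "q = q'" by linarith
  then show ?thesis
  proof cases
    case 1 then show ?thesis using g[OF assms(1,2)] by simp
  next
    case 2 then show ?thesis using g[OF assms(2,1)] by (simp add: abs_minus_commute)
  qed simp
qed

theorem lemma16:
  fixes p q q' :: real and m n i j :: nat and \<sigma> \<tau> :: "nat \<Rightarrow> nat"
  assumes "0 < p" "p < 1/16" "0 < m" "0 < n"
    and "i \<in> {3,4}" "j \<in> {3,4}"
    and "\<sigma> \<in> words" "\<tau> \<in> words"
    and "q \<in> Dmn m n p" "q' \<in> Dmn m n p" "q \<noteq> q'"
  shows "\<bar>phi1 p m i q \<sigma> - phi2 p n j q \<tau> - phi1 p m i q' \<sigma> + phi2 p n j q' \<tau>\<bar>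
           > 11 * p ^ m * \<bar>q' - q\<bar>"
proof -
  have p: "0 < p" "p < 1" using assms by auto
  have q: "0 < q" "q < 1/16" and q': "0 < q'" "q' < 1/16" using assms(9,10) by (auto simp: Dmn_def)
  have q1: "0 < q" "q < 1" and q1': "0 < q'" "q' < 1" using q q' by auto
  define D where "D = \<bar>q - q'\<bar>"
  have D0: "0 < D" using assms(11) by (simp add: D_def)
  have pm: "0 < p ^ m" using p by simp
  define X where "X = p ^ m * D"
  have X0: "0 < X" using pm D0 by (simp add: X_def)
  define a where "a = pis p q \<sigma>"
  define a' where "a' = pis p q' \<sigma>"
  define y where "y = pis p q \<tau>"
  define y' where "y' = pis p q' \<tau>"
  have a01: "0 \<le> a" "a \<le> 1" unfolding a_def using pis_nonneg[OF p q1] pis_le1[OF p q1] by auto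
  have y01: "0 \<le> y" "y \<le> 1" unfolding y_def using pis_nonneg[OF p q1] pis_le1[OF p q1] by auto
  have la: "\<bar>a - a'\<bar> \<le> 16/15 * D" unfolding a_def a'_def D_def using lip[of p q q'] assms(2) p q q' by simp
  have ly: "\<bar>y - y'\<bar> \<le> 16/15 * D" unfolding y_def y'_def D_def using lip[of p q q'] assms(2) p q q' by simp
  have ph1: "phi1 p m i r \<sigma> = p ^ m * S p r i (pis p r \<sigma>)" if "0 < r" "r < 1" for r
    unfolding phi1_def S1_pow using piK_eq[OF p that assms(7)] by simp
  have ph2: "phi2 p n j r \<tau> = r ^ n * S p r j (pis p r \<tau>)" if "0 < r" "r < 1" for r
    unfolding phi2_def S2_pow using piK_eq[OF p that assms(8)] by simp
  define T where "T = S p q i a - S p q' i a'"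
  define G where "G = S p q j y"
  define G' where "G' = S p q' j y'"
  have lT: "\<bar>T\<bar> \<le> 16/15 * D"
  proof -
    have "\<bar>T\<bar> \<le> D + 1/16 * \<bar>a - a'\<bar>" unfolding T_def D_def
      by (rule S_lip) (use p assms(2) q' a01 in auto)
    moreover have "1/16 * \<bar>a - a'\<bar> \<le> 1/16 * (16/15 * D)" using la by (intro mult_left_mono) auto
    ultimately show ?thesis by simp
  qed
  have lG: "\<bar>G - G'\<bar> \<le> 16/15 * D"
  proof -
    have "\<bar>G - G'\<bar> \<le> D + 1/16 * \<bar>y - y'\<bar>" unfolding G_def G'_def D_def
      by (rule S_lip) (use p assms(2) q' y01 in auto)
    moreover have "1/16 * \<bar>y - y'\<bar> \<le> 1/16 * (16/15 * D)" using ly by (intro mult_left_mono) auto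
    ultimately show ?thesis by simp
  qed
  have G15: "15/16 < G"
  proof -
    have "p * y \<ge> 0" "q * y \<ge> 0" using p q y01 by auto
    then show ?thesis using assms(6) assms(2) q unfolding G_def S_def by auto
  qed
  have qn: "q' ^ n \<le> 16/15 * p ^ m" "0 \<le> q' ^ n"
    using assms(10) pm q' by (auto simp: Dmn_def divide_le_eq mult.commute)
  have E: "phi1 p m i q \<sigma> - phi2 p n j q \<tau> - phi1 p m i q' \<sigma> + phi2 p n j q' \<tau>
      = p ^ m * T - (q ^ n - q' ^ n) * G - q' ^ n * (G - G')"
    unfolding ph1[OF q1] ph1[OF q1'] ph2[OF q1] ph2[OF q1'] T_def G_def G'_def a_def a'_def y_def y'_def
    by (simp add: algebra_simps)
  have pd: "15 * X \<le> \<bar>q ^ n - q' ^ n\<bar>"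
    unfolding X_def D_def by (rule powdiff_abs) (use assms in auto)
  have t1: "15 * X * (15/16) < \<bar>q ^ n - q' ^ n\<bar> * G"
  proof -
    have "15 * X * (15/16) < 15 * X * G" using X0 G15 by simp
    also have "\<dots> \<le> \<bar>q ^ n - q' ^ n\<bar> * G" using pd G15 by (intro mult_right_mono) auto
    finally show ?thesis .
  qed
  have t2: "\<bar>p ^ m * T\<bar> \<le> 16/15 * X"
  proof -
    have "\<bar>p ^ m * T\<bar> = p ^ m * \<bar>T\<bar>" using pm by (simp add: abs_mult)
    also have "\<dots> \<le> p ^ m * (16/15 * D)" using lT pm by (intro mult_left_mono) auto
    finally show ?thesis by (simp add: X_def)
  qed
  have t3: "\<bar>q' ^ n * (G - G')\<bar> \<le> 256/225 * X"
  proof -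
    have "\<bar>q' ^ n * (G - G')\<bar> = q' ^ n * \<bar>G - G'\<bar>" using qn by (simp add: abs_mult)
    also have "\<dots> \<le> (16/15 * p ^ m) * (16/15 * D)" using lG qn by (intro mult_mono) auto
    finally show ?thesis by (simp add: X_def)
  qed
  have "\<bar>(q ^ n - q' ^ n) * G\<bar> = \<bar>q ^ n - q' ^ n\<bar> * G" using G15 by (simp add: abs_mult)
  then have "11 * X < \<bar>p ^ m * T - (q ^ n - q' ^ n) * G - q' ^ n * (G - G')\<bar>"
    using t1 t2 t3 X0 by linarith
  then show ?thesis unfolding E X_def D_def by (simp add: abs_minus_commute mult.assoc)
qed

end
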